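(* Let $M \in \mathbb{R}^{d' \times n}$ and $B \in \mathbb{R}^{n \times d}$ be Gale dual, i.e. $\mathrm{im}(B)=\ker(M)$ and $\ker(B)=\{0\}$. Let $S \subseteq \mathbb{R}^n$ be a vector subspace and $A \in \mathbb{R}^{m \times n}$ with $S = \ker(A)$. The following are equivalent: (i) the map $x \mapsto x^M$ is injective on $(x'+S) \cap \mathbb{R}^n_+$ for all $x' \in \mathbb{R}^n_+$; (ii) $\sigma(\ker(M)) \cap \sigma(S) = \{0\}$; (iii) for every $x^* \in \mathbb{R}^n_+$, the map $f_{x^*}\colon \mathbb{R}^d_+ \to \mathbb{R}^m$, $\xi \mapsto A_{x^*}\, \xi^B$, is injective.
   Context: $\mathbb{R}_+$ denotes the strictly positive reals. For $x\in\mathbb{R}^n_+$, $(x^M)_k=\prod_i x_i^{m_{ki}}$; for $\xi\in\mathbb{R}^d_+$, $(\xi^B)_i=\prod_{j}\xi_j^{b_{ij}}$ (real exponents). $A_{x^*}=A\,\mathrm{diag}(x^* )$. $\sigma$ is the componentwise sign vector, $\sigma(T)=\{\sigma(x)\mid x\in T\}$, and $0$ denotes the zero sign vector. *)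

theory Defs
  imports "HOL-Analysis.Analysis"
begin

definition posorth :: "(real ^ 'n) set" where
  "posorth = {x. \<forall>i. x $ i > 0}"

definition mpow :: "real ^ 'n ^ 'k \<Rightarrow> real ^ 'n \<Rightarrow> real ^ 'k" where
  "mpow M x = (\<chi> k. \<Prod>i\<in>UNIV. (x $ i) powr (M $ k $ i))"

definition diagm :: "real ^ 'n \<Rightarrow> real ^ 'n ^ 'n" where
  "diagm x = (\<chi> i j. if i = j then x $ i else 0)"

definition signvec :: "real ^ 'n \<Rightarrow> real ^ 'n" where
  "signvec x = (\<chi> i. sgn (x $ i))"

end

theory Submission
  imports Defs
begin

definition lnv :: "real ^ 'n \<Rightarrow> real ^ 'n" where "lnv x = (\<chi> i. ln (x $ i))"
definition expv :: "real ^ 'n \<Rightarrow> real ^ 'n" where "expv x = (\<chi> i. exp (x $ i))"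

lemma mpow_exp:
  assumes "x \<in> posorth"
  shows "mpow M x = expv (M *v lnv x)"
proof -
  have p: "\<And>i. x $ i > 0" using assms by (simp add: posorth_def)
  show ?thesis
    unfolding mpow_def expv_def lnv_def matrix_vector_mult_def
    by (simp add: vec_eq_iff powr_def p exp_sum less_imp_neq[OF p, symmetric])
qed

lemma expv_inj: "expv a = expv b \<Longrightarrow> a = b"
  by (simp add: expv_def vec_eq_iff)

lemma lnv_inj: "x \<in> posorth \<Longrightarrow> y \<in> posorth \<Longrightarrow> lnv x = lnv y \<Longrightarrow> x = y"
  by (simp add: lnv_def vec_eq_iff posorth_def)

lemma lnv_expv: "lnv (expv a) = a" by (simp add: lnv_def expv_def vec_eq_iff)

lemma expv_pos: "expv a \<in> posorth" by (simp add: expv_def posorth_def)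

lemma signvec_eq: "signvec u = signvec v \<longleftrightarrow> (\<forall>i. sgn (u $ i) = sgn (v $ i))"
  by (simp add: signvec_def vec_eq_iff sgn_0_0)

lemma signvec_zero: "signvec u = 0 \<longleftrightarrow> u = 0"
  by (simp add: signvec_def vec_eq_iff sgn_0_0)

lemma sgn_exp_diff: "sgn (exp a - exp b) = sgn ((a::real) - b)"
  by (cases "a < b"; cases "a = b") (auto simp: sgn_if)

lemma sgn_ln_diff: "(a::real) > 0 \<Longrightarrow> b > 0 \<Longrightarrow> sgn (ln a - ln b) = sgn (a - b)"
  by (cases "a < b"; cases "a = b") (auto simp: sgn_if)

lemma construct_c:
  assumes "sgn (u::real) = sgn v"
  shows "\<exists>c>0. c * (exp u - 1) = v"
proof (cases "u = 0")
  case True then show ?thesis using assms by (intro exI[of _ 1]) (auto simp: sgn_if split: if_splits)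
next
  case False
  then have "exp u \<noteq> 1" by simp
  have "v / (exp u - 1) > 0"
  proof (cases "u > 0")
    case True then have "v > 0" using assms by (auto simp: sgn_if split: if_splits)
    with True show ?thesis by simp
  next
    case f: False then have "u < 0" using False by simp
    then have "v < 0" using assms by (auto simp: sgn_if split: if_splits)
    moreover have "exp u < 1" using \<open>u<0\<close> by simp
    ultimately show ?thesis by (simp add: divide_neg_neg)
  qed
  then show ?thesis using \<open>exp u \<noteq> 1\<close> by (intro exI[of _ "v / (exp u - 1)"]) auto
qed

lemma diagm_mult: "diagm x *v z = (\<chi> i. x $ i * z $ i)"
proof -
  have "\<And>i. (\<Sum>j\<in>UNIV. (if i = j then x $ i else 0) * z $ j) = x $ i * z $ i"
    by (simp add: if_distrib[of "\<lambda>t. t * _"] cong: if_cong)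
  then show ?thesis by (simp add: diagm_def matrix_vector_mult_def vec_eq_iff)
qed


lemma sub_ii:
  fixes M :: "real ^ 'n ^ 'dp" and S :: "(real ^ 'n) set"
  assumes "subspace S"
  shows "(signvec ` {x. M *v x = 0} \<inter> signvec ` S = {0}) \<longleftrightarrow>
    \<not> (\<exists>u v. M *v u = 0 \<and> v \<in> S \<and> v \<noteq> 0 \<and> signvec u = signvec v)"
proof
  assume h: "signvec ` {x. M *v x = 0} \<inter> signvec ` S = {0}"
  show "\<not> (\<exists>u v. M *v u = 0 \<and> v \<in> S \<and> v \<noteq> 0 \<and> signvec u = signvec v)"
  proof
    assume "\<exists>u v. M *v u = 0 \<and> v \<in> S \<and> v \<noteq> 0 \<and> signvec u = signvec v"
    then obtain u v where "M *v u = 0" "v \<in> S" "v \<noteq> 0" "signvec u = signvec v" by blast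
    then have "signvec v \<in> signvec ` {x. M *v x = 0}" by (intro image_eqI[of _ _ u]) auto
    moreover have "signvec v \<in> signvec ` S" using \<open>v \<in> S\<close> by (rule imageI)
    ultimately have "signvec v \<in> signvec ` {x. M *v x = 0} \<inter> signvec ` S" by blast
    then have "signvec v = 0" using h by blast
    then show False using \<open>v \<noteq> 0\<close> signvec_zero by blast
  qed
next
  assume h: "\<not> (\<exists>u v. M *v u = 0 \<and> v \<in> S \<and> v \<noteq> 0 \<and> signvec u = signvec v)"
  have z: "signvec 0 = (0::real^'n)" by (simp add: signvec_zero)
  have "0 \<in> S" using assms by (simp add: subspace_0)
  have "0 \<in> signvec ` {x. M *v x = 0} \<inter> signvec ` S"
    using z \<open>0 \<in> S\<close> by (auto intro!: image_eqI[of _ _ 0])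
  moreover have "t = 0" if ht: "t \<in> signvec ` {x. M *v x = 0} \<inter> signvec ` S" for t
  proof -
    obtain u v where "M *v u = 0" "v \<in> S" "t = signvec u" "t = signvec v" using ht by blast
    then have "v = 0" using h by fastforce
    then show ?thesis using \<open>t = signvec v\<close> z by simp
  qed
  ultimately show "signvec ` {x. M *v x = 0} \<inter> signvec ` S = {0}" by blast
qed

lemma choose_c:
  fixes u v :: "real ^ 'n"
  assumes "signvec u = signvec v"
  shows "\<exists>c::real^'n. c \<in> posorth \<and> (\<forall>i. c $ i * (exp (u $ i) - 1) = v $ i)"
proof -
  have "\<forall>i. \<exists>c>0. c * (exp (u $ i) - 1) = v $ i"
    using assms construct_c by (auto simp: signvec_eq)
  then obtain f where f: "\<And>i. f i > 0 \<and> f i * (exp (u $ i) - 1) = v $ i" by metis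
  show ?thesis using f by (intro exI[of _ "\<chi> i. f i"]) (auto simp: posorth_def)
qed

lemma sub_i:
  fixes M :: "real ^ 'n ^ 'dp" and S :: "(real ^ 'n) set"
  assumes "subspace S"
  shows "(\<forall>x' \<in> posorth. inj_on (mpow M) ((\<lambda>s. x' + s) ` S \<inter> posorth)) \<longleftrightarrow>
    \<not> (\<exists>u v. M *v u = 0 \<and> v \<in> S \<and> v \<noteq> 0 \<and> signvec u = signvec v)"
proof
  assume h: "\<forall>x' \<in> posorth. inj_on (mpow M) ((\<lambda>s. x' + s) ` S \<inter> posorth)"
  show "\<not> (\<exists>u v. M *v u = 0 \<and> v \<in> S \<and> v \<noteq> 0 \<and> signvec u = signvec v)"
  proof
    assume "\<exists>u v. M *v u = 0 \<and> v \<in> S \<and> v \<noteq> 0 \<and> signvec u = signvec v"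
    then obtain u v where uv: "M *v u = 0" "v \<in> S" "v \<noteq> 0" "signvec u = signvec v" by blast
    obtain c where c: "c \<in> posorth" "\<And>i. c $ i * (exp (u $ i) - 1) = v $ i"
      using choose_c[OF uv(4)] by blast
    define x where "x = c + v"
    have cp: "\<And>i. c $ i > 0" using c(1) by (simp add: posorth_def)
    have xe: "\<And>i. x $ i = c $ i * exp (u $ i)" using c(2) unfolding x_def
      by (metis right_diff_distrib mult.right_neutral diff_add_cancel add.commute vector_add_component)
    have xp: "x \<in> posorth" using cp xe by (simp add: posorth_def)
    have "lnv x = lnv c + u" using xe cp by (simp add: lnv_def vec_eq_iff ln_mult less_imp_neq[OF cp, symmetric])
    then have "M *v lnv x = M *v lnv c" using uv(1) by (simp add: matrix_vector_right_distrib)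
    then have "mpow M x = mpow M c" using mpow_exp xp c(1) by metis
    moreover have "x \<in> (\<lambda>s. c + s) ` S \<inter> posorth" using xp uv(2) x_def by blast
    moreover have "c \<in> (\<lambda>s. c + s) ` S \<inter> posorth"
      using c(1) assms by (auto intro!: image_eqI[of _ _ 0] simp: subspace_0)
    ultimately have "x = c" using h c(1) by (meson inj_onD)
    then show False using x_def uv(3) by simp
  qed
next
  assume h: "\<not> (\<exists>u v. M *v u = 0 \<and> v \<in> S \<and> v \<noteq> 0 \<and> signvec u = signvec v)"
  show "\<forall>x' \<in> posorth. inj_on (mpow M) ((\<lambda>s. x' + s) ` S \<inter> posorth)"
  proof (intro ballI inj_onI)
    fix x' x y assume x: "x \<in> (\<lambda>s. x' + s) ` S \<inter> posorth" and y: "y \<in> (\<lambda>s. x' + s) ` S \<inter> posorth"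
      and e: "mpow M x = mpow M y"
    obtain s1 where s1: "s1 \<in> S" "x = x' + s1" using x by blast
    obtain s2 where s2: "s2 \<in> S" "y = x' + s2" using y by blast
    have "x - y \<in> S" using s1 s2 assms by (simp add: subspace_diff)
    have xp: "x \<in> posorth" and yp: "y \<in> posorth" using x y by auto
    have "M *v lnv x = M *v lnv y" using e mpow_exp[OF xp] mpow_exp[OF yp] expv_inj by metis
    then have "M *v (lnv x - lnv y) = 0" by (simp add: matrix_vector_mult_diff_distrib)
    moreover have "signvec (lnv x - lnv y) = signvec (x - y)"
      using xp yp by (simp add: signvec_eq lnv_def posorth_def sgn_ln_diff)
    ultimately have "x - y = 0" using h \<open>x - y \<in> S\<close> by blast
    then show "x = y" by simp
  qed
qed

lemma sub_iii:
  fixes M :: "real ^ 'n ^ 'dp" and B :: "real ^ 'd ^ 'n"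
    and A :: "real ^ 'n ^ 'm" and S :: "(real ^ 'n) set"
  assumes gale_im: "range (\<lambda>\<xi>. B *v \<xi>) = {x. M *v x = 0}"
    and gale_ker: "{\<xi>. B *v \<xi> = 0} = {0}"
    and S_ker: "S = {x. A *v x = 0}"
  shows "(\<forall>xs \<in> posorth. inj_on (\<lambda>\<xi>. (A ** diagm xs) *v mpow B \<xi>) posorth) \<longleftrightarrow>
    \<not> (\<exists>u v. M *v u = 0 \<and> v \<in> S \<and> v \<noteq> 0 \<and> signvec u = signvec v)"
proof
  assume h: "\<forall>xs \<in> posorth. inj_on (\<lambda>\<xi>. (A ** diagm xs) *v mpow B \<xi>) posorth"
  show "\<not> (\<exists>u v. M *v u = 0 \<and> v \<in> S \<and> v \<noteq> 0 \<and> signvec u = signvec v)"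
  proof
    assume "\<exists>u v. M *v u = 0 \<and> v \<in> S \<and> v \<noteq> 0 \<and> signvec u = signvec v"
    then obtain u v where uv: "M *v u = 0" "v \<in> S" "v \<noteq> 0" "signvec u = signvec v" by blast
    obtain c where c: "c \<in> posorth" "\<And>i. c $ i * (exp (u $ i) - 1) = v $ i"
      using choose_c[OF uv(4)] by blast
    obtain \<eta> where eta: "u = B *v \<eta>" using uv(1) gale_im by (metis (mono_tags, lifting) mem_Collect_eq rangeE)
    have "u \<noteq> 0" using uv(3,4) signvec_zero by metis
    then have "\<eta> \<noteq> 0" using eta by auto
    have m1: "mpow B (expv \<eta>) = expv u" using mpow_exp[OF expv_pos, of B \<eta>] eta by (simp add: lnv_expv)
    have m2: "mpow B (expv 0) = expv 0" using mpow_exp[OF expv_pos, of B 0] by (simp add: lnv_expv)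
    have "diagm c *v (expv u - expv 0) = v" using c(2)
      by (simp add: diagm_mult expv_def vec_eq_iff)
    then have "A *v (diagm c *v (expv u - expv 0)) = 0"
      using uv(2) S_ker by simp
    then have "A *v (diagm c *v expv u) - A *v (diagm c *v expv 0) = 0"
      by (simp only: matrix_vector_mult_diff_distrib)
    then have "(A ** diagm c) *v mpow B (expv \<eta>) = (A ** diagm c) *v mpow B (expv 0)"
      by (simp add: m1 m2 matrix_vector_mul_assoc[symmetric])
    then have "expv \<eta> = expv 0" using h c(1) expv_pos by (meson inj_onD)
    then show False using expv_inj \<open>\<eta> \<noteq> 0\<close> by blast
  qed
next
  assume h: "\<not> (\<exists>u v. M *v u = 0 \<and> v \<in> S \<and> v \<noteq> 0 \<and> signvec u = signvec v)"
  show "\<forall>xs \<in> posorth. inj_on (\<lambda>\<xi>. (A ** diagm xs) *v mpow B \<xi>) posorth"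
  proof (intro ballI inj_onI)
    fix xs x y assume xs: "xs \<in> posorth" and xp: "x \<in> posorth" and yp: "y \<in> posorth"
      and e: "(A ** diagm xs) *v mpow B x = (A ** diagm xs) *v mpow B y"
    define w1 where "w1 = B *v lnv x"
    define w2 where "w2 = B *v lnv y"
    define v where "v = diagm xs *v (expv w1 - expv w2)"
    have "A *v v = 0" using e unfolding v_def w1_def w2_def
      by (simp add: mpow_exp[OF xp, symmetric] mpow_exp[OF yp, symmetric]
          matrix_vector_mult_diff_distrib matrix_vector_mul_assoc)
    then have vS: "v \<in> S" using S_ker by simp
    have "M *v (w1 - w2) = 0" using gale_im unfolding w1_def w2_def
      by (metis (mono_tags, lifting) matrix_vector_mult_diff_distrib mem_Collect_eq rangeI)
    moreover have "signvec (w1 - w2) = signvec v"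
      using xs by (simp add: v_def signvec_eq diagm_mult expv_def posorth_def sgn_mult sgn_exp_diff)
    ultimately have "v = 0" using h vS by blast
    then have "w1 - w2 = 0" using \<open>signvec (w1 - w2) = signvec v\<close> signvec_zero by metis
    then have "B *v (lnv x - lnv y) = 0" unfolding w1_def w2_def by (simp add: matrix_vector_mult_diff_distrib)
    then have "lnv x - lnv y = 0" using gale_ker by blast
    then show "x = y" using lnv_inj xp yp by simp
  qed
qed

theorem mainTheorem17:
  fixes M :: "real ^ 'n ^ 'dp" and B :: "real ^ 'd ^ 'n"
    and A :: "real ^ 'n ^ 'm" and S :: "(real ^ 'n) set"
  assumes gale_im: "range (\<lambda>\<xi>. B *v \<xi>) = {x. M *v x = 0}"
    and gale_ker: "{\<xi>. B *v \<xi> = 0} = {0}"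
    and S_sub: "subspace S"
    and S_ker: "S = {x. A *v x = 0}"
  shows "((\<forall>x' \<in> posorth. inj_on (mpow M) ((\<lambda>s. x' + s) ` S \<inter> posorth))
           \<longleftrightarrow> (signvec ` {x. M *v x = 0} \<inter> signvec ` S = {0}))
       \<and> ((signvec ` {x. M *v x = 0} \<inter> signvec ` S = {0})
           \<longleftrightarrow> (\<forall>xs \<in> posorth. inj_on (\<lambda>\<xi>. (A ** diagm xs) *v mpow B \<xi>) posorth))"
  using sub_i[OF S_sub, of M] sub_ii[OF S_sub, of M] sub_iii[OF gale_im gale_ker S_ker] by blast

end
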